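(* Let $R$ be an associative $\mathbb{C}$-algebra and $W$ a left $R$-module. Let $M=(M_{ij})_{0\leq i,j\leq N}$ be an almost triangular matrix with entries in $R$, and let $\xi=(\xi_0,\ldots,\xi_N)^T\in W^{N+1}$ satisfy $M\xi=0$. Then $\det_{\mathrm{right}}(M^\tau)\,\xi_N=0$.
   Context: Almost triangular matrix. A matrix $M$ is almost triangular if $M_{ij}=0$ whenever $i>j+1$ and $M_{i+1,i}=-1$ for all $i$. Anti-diagonal transpose. $M^\tau$ denotes the matrix with $M^\tau_{ij}=M_{N-j,N-i}$. Right determinant. For a square matrix $X=(X_{ij})_{0\leq i,j\leq m}$ over $R$: - if $m=0$, $\det_{\mathrm{right}}X=X_{00}$; - otherwise $\det_{\mathrm{right}}X=\sum_{i=0}^mX_{im}C_{im}$, where $C_{im}=(-1)^{i+m}\det_{\mathrm{right}}X^{(i,m)}$, $X^{(i,m)}$ is $X$ with row $i$ and column $m$ deleted, and products are taken in the order written. *)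

theory Defs
  imports Complex_Main
begin

definition complex_algebra :: "(complex \<Rightarrow> 'r::ring_1) \<Rightarrow> bool" where
  "complex_algebra emb \<longleftrightarrow>
     emb 1 = 1 \<and>
     (\<forall>a b. emb (a + b) = emb a + emb b) \<and>
     (\<forall>a b. emb (a * b) = emb a * emb b) \<and>
     (\<forall>a x. emb a * x = x * emb a)"

definition left_module :: "('r::ring_1 \<Rightarrow> 'w::ab_group_add \<Rightarrow> 'w) \<Rightarrow> bool" where
  "left_module act \<longleftrightarrow>
     (\<forall>a v w. act a (v + w) = act a v + act a w) \<and>
     (\<forall>a b w. act (a + b) w = act a w + act b w) \<and>
     (\<forall>a b w. act (a * b) w = act a (act b w)) \<and>
     (\<forall>w. act 1 w = w)"

text \<open>Matrices indexed by 0..N are functions nat => nat => 'r (only entries with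
indices \<le> N matter).\<close>
definition almost_triangular :: "nat \<Rightarrow> (nat \<Rightarrow> nat \<Rightarrow> 'r::ring_1) \<Rightarrow> bool" where
  "almost_triangular N M \<longleftrightarrow>
     (\<forall>i\<le>N. \<forall>j\<le>N. i > j + 1 \<longrightarrow> M i j = 0) \<and>
     (\<forall>i<N. M (Suc i) i = -1)"

definition antidiag_transpose :: "nat \<Rightarrow> (nat \<Rightarrow> nat \<Rightarrow> 'r) \<Rightarrow> nat \<Rightarrow> nat \<Rightarrow> 'r" where
  "antidiag_transpose N M = (\<lambda>i j. M (N - j) (N - i))"

definition minor_mat :: "(nat \<Rightarrow> nat \<Rightarrow> 'r) \<Rightarrow> nat \<Rightarrow> nat \<Rightarrow> nat \<Rightarrow> nat \<Rightarrow> 'r" where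
  "minor_mat X i j = (\<lambda>a b. X (if a < i then a else Suc a) (if b < j then b else Suc b))"

text \<open>Right determinant of the (m+1)x(m+1) matrix (X_ab), 0 \<le> a,b \<le> m,
expanded along the last column, products in the written order.\<close>
fun det_right :: "nat \<Rightarrow> (nat \<Rightarrow> nat \<Rightarrow> 'r::ring_1) \<Rightarrow> 'r" where
  "det_right 0 X = X 0 0"
| "det_right (Suc m) X =
     (\<Sum>i\<le>Suc m. X i (Suc m) * ((-1) ^ (i + Suc m) * det_right m (minor_mat X i (Suc m))))"

end

theory Submission
  imports Defs
begin

lemma det_zero_row:
  "r \<le> m \<Longrightarrow> \<forall>j\<le>m. X r j = 0 \<Longrightarrow> det_right m X = 0"
proof (induction m arbitrary: X r)
  case 0
  then show ?case by simp
next
  case (Suc m)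
  have "\<And>i. i \<le> Suc m \<Longrightarrow> X i (Suc m) * ((-1) ^ (i + Suc m) * det_right m (minor_mat X i (Suc m))) = 0"
  proof -
    fix i assume i: "i \<le> Suc m"
    show "X i (Suc m) * ((-1) ^ (i + Suc m) * det_right m (minor_mat X i (Suc m))) = 0"
    proof (cases "i = r")
      case True
      then show ?thesis using Suc.prems by simp
    next
      case False
      define r' where "r' = (if r < i then r else r - 1)"
      have r': "r' \<le> m" using i False Suc.prems(1) unfolding r'_def by auto
      have "\<forall>j\<le>m. minor_mat X i (Suc m) r' j = 0"
        using False Suc.prems(2) unfolding r'_def minor_mat_def by auto
      then have "det_right m (minor_mat X i (Suc m)) = 0" using Suc.IH r' by blast
      then show ?thesis by simp
    qed
  qed
  then show ?case by simp
qed

lemma det_cong: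
  "\<forall>a\<le>m. \<forall>b\<le>m. X a b = Y a b \<Longrightarrow> det_right m X = det_right m Y"
proof (induction m arbitrary: X Y)
  case 0
  then show ?case by simp
next
  case (Suc m)
  have "\<And>i. i \<le> Suc m \<Longrightarrow> det_right m (minor_mat X i (Suc m)) = det_right m (minor_mat Y i (Suc m))"
    apply (rule Suc.IH)
    using Suc.prems unfolding minor_mat_def by auto
  then show ?case using Suc.prems by (auto intro!: sum.cong)
qed

lemma det_last_row:
  assumes "\<forall>j<Suc k. Y (Suc k) j = 0" and "Y (Suc k) (Suc k) = -1"
  shows "det_right (Suc k) Y = - det_right k Y"
proof -
  have z: "\<And>i. i \<le> k \<Longrightarrow> det_right k (minor_mat Y i (Suc k)) = 0"
    apply (rule det_zero_row[of k])
    using assms(1) unfolding minor_mat_def by auto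
  have c: "det_right k (minor_mat Y (Suc k) (Suc k)) = det_right k Y"
    apply (rule det_cong) unfolding minor_mat_def by auto
  have ev: "((-1::'a) ^ (Suc k + Suc k)) = 1"
    by (metis add_Suc mult_2 power_minus1_even)
  have s0: "(\<Sum>i\<le>k. Y i (Suc k) * ((-1) ^ (i + Suc k) * det_right k (minor_mat Y i (Suc k)))) = 0"
    by (rule sum.neutral) (simp add: z)
  show ?thesis
    by (simp only: det_right.simps sum.atMost_Suc s0 c ev) (simp add: assms(2))
qed

definition Q :: "(nat \<Rightarrow> nat \<Rightarrow> 'r::ring_1) \<Rightarrow> nat \<Rightarrow> 'r" where
  "Q X i = (if i = 0 then 1 else det_right (i - 1) X)"

lemma det_tri_down:
  assumes "\<forall>a. i \<le> a \<and> a \<le> i + d \<longrightarrow> (\<forall>b<a. Z a b = 0) \<and> Z a a = -1"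
  shows "det_right (i + d) Z = (-1) ^ (d + 1) * Q Z i"
  using assms
proof (induction d)
  case 0
  show ?case
  proof (cases i)
    case 0
    then show ?thesis using "0.prems" by (simp add: Q_def)
  next
    case (Suc k)
    have "det_right (Suc k) Z = - det_right k Z"
      apply (rule det_last_row) using "0.prems" Suc by auto
    then show ?thesis using Suc by (simp add: Q_def)
  qed
next
  case (Suc d)
  have "det_right (Suc (i + d)) Z = - det_right (i + d) Z"
    apply (rule det_last_row) using Suc.prems by auto
  also have "det_right (i + d) Z = (-1) ^ (d + 1) * Q Z i"
    apply (rule Suc.IH) using Suc.prems by auto
  finally show ?case by simp
qed

definition hess :: "nat \<Rightarrow> (nat \<Rightarrow> nat \<Rightarrow> 'r::ring_1) \<Rightarrow> bool" where
  "hess m X \<longleftrightarrow> (\<forall>a\<le>m. \<forall>b\<le>m. a > b + 1 \<longrightarrow> X a b = 0) \<and> (\<forall>a<m. X (Suc a) a = -1)"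

lemma det_hess:
  assumes "hess m X"
  shows "det_right m X = (\<Sum>i\<le>m. X i m * Q X i)"
proof (cases m)
  case 0
  then show ?thesis by (simp add: Q_def)
next
  case (Suc n)
  have key: "(-1) ^ (i + Suc n) * det_right n (minor_mat X i (Suc n)) = Q X i" if i: "i \<le> Suc n" for i
  proof (cases "i = Suc n")
    case True
    have "det_right n (minor_mat X i (Suc n)) = det_right n X"
      apply (rule det_cong) using True unfolding minor_mat_def by auto
    moreover have "((-1::'a) ^ (Suc n + Suc n)) = 1"
      by (metis add_Suc mult_2 power_minus1_even)
    ultimately show ?thesis using True by (simp add: Q_def)
  next
    case False
    define d where "d = n - i"
    have nid: "n = i + d" using False i unfolding d_def by auto
    have "det_right (i + d) (minor_mat X i (Suc n)) = (-1) ^ (d + 1) * Q (minor_mat X i (Suc n)) i"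
    proof (rule det_tri_down, intro allI impI conjI)
      fix a b assume a: "i \<le> a \<and> a \<le> i + d" and b: "b < a"
      show "minor_mat X i (Suc n) a b = 0"
        using assms a b nid unfolding hess_def minor_mat_def Suc by auto
    next
      fix a assume a: "i \<le> a \<and> a \<le> i + d"
      show "minor_mat X i (Suc n) a a = -1"
        using assms a nid unfolding hess_def minor_mat_def Suc by auto
    qed
    moreover have "Q (minor_mat X i (Suc n)) i = Q X i"
      unfolding Q_def
      apply (cases "i = 0", simp)
      apply simp
      apply (rule det_cong) using nid unfolding minor_mat_def by auto
    moreover have "((-1::'a) ^ (i + Suc n)) * (-1) ^ (d + 1) = 1"
    proof -
      have "((-1::'a) ^ (i + Suc n)) * (-1) ^ (d + 1) = (-1) ^ (2 * (i + d + 1))"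
        by (simp add: nid power_add[symmetric] algebra_simps)
      also have "\<dots> = 1" by (simp add: power_mult)
      finally show ?thesis .
    qed
    ultimately show ?thesis using nid
      by (metis mult.assoc mult_1)
  qed
  show ?thesis unfolding Suc det_right.simps
  proof (rule sum.cong[OF refl])
    fix x assume "x \<in> {..Suc n}"
    then have "x \<le> Suc n" by simp
    then show "X x (Suc n) * ((-1) ^ (x + Suc n) * det_right n (minor_mat X x (Suc n))) = X x (Suc n) * Q X x"
      by (simp only: key)
  qed
qed

lemma lm_zero: "left_module act \<Longrightarrow> act 0 w = 0"
proof -
  assume lm: "left_module act"
  have "act (0 + 0) w = act 0 w + act 0 w" using lm unfolding left_module_def by blast
  then show ?thesis by simp
qed

lemma lm_neg1: "left_module act \<Longrightarrow> act (-1) w = - w"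
proof -
  assume lm: "left_module act"
  have "act (-1 + 1) w = act (-1) w + act 1 w" using lm unfolding left_module_def by blast
  then have "0 = act (-1) w + w" using lm lm_zero[OF lm] unfolding left_module_def by simp
  then show ?thesis by (simp add: eq_neg_iff_add_eq_0)
qed

lemma lm_sum: "left_module act \<Longrightarrow> act (\<Sum>i\<in>A. f i) w = (\<Sum>i\<in>A. act (f i) w)"
proof (induction A rule: infinite_finite_induct)
  case (infinite A) then show ?case by (simp add: lm_zero)
next
  case empty then show ?case by (simp add: lm_zero)
next
  case (insert x F) then show ?case unfolding left_module_def by simp
qed

lemma sum_rev_idx: "(k::nat) \<le> N \<Longrightarrow> (\<Sum>i\<le>k. g (N - i)) = (\<Sum>j\<in>{N-k..N}. (g j :: 'a::comm_monoid_add))"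
proof (induction k)
  case 0 then show ?case by simp
next
  case (Suc k)
  have e: "{N - Suc k..N} = insert (N - Suc k) {N-k..N}" using Suc.prems by auto
  have "N - Suc k \<notin> {N-k..N}" using Suc.prems by auto
  then show ?case using Suc by (simp add: e add.commute)
qed

theorem lemma1p1p4:
  fixes emb :: "complex \<Rightarrow> 'r::ring_1"
    and act :: "'r \<Rightarrow> 'w::ab_group_add \<Rightarrow> 'w"
    and N :: nat
    and M :: "nat \<Rightarrow> nat \<Rightarrow> 'r"
    and \<xi> :: "nat \<Rightarrow> 'w"
  assumes "complex_algebra emb"
    and "left_module act"
    and "almost_triangular N M"
    and "\<forall>i\<le>N. (\<Sum>j\<le>N. act (M i j) (\<xi> j)) = 0"
  shows "act (det_right N (antidiag_transpose N M)) (\<xi> N) = 0"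
proof -
  define X where "X = antidiag_transpose N M"
  have lm: "left_module act" by fact
  have hs: "hess k X" if "k \<le> N" for k
    unfolding hess_def X_def antidiag_transpose_def
  proof (intro conjI allI impI)
    fix a b assume "a \<le> k" "b \<le> k" "a > b + 1"
    then show "M (N - b) (N - a) = 0" using assms(3) that unfolding almost_triangular_def by auto
  next
    fix a assume a: "a < k"
    have "M (Suc (N - Suc a)) (N - Suc a) = -1"
      using assms(3) a that unfolding almost_triangular_def by auto
    moreover have "Suc (N - Suc a) = N - a" using a that by auto
    ultimately show "M (N - a) (N - Suc a) = -1" by simp
  qed
  have step: "act (det_right k X) (\<xi> N) = (\<Sum>j\<in>{N-k..N}. act (M (N-k) j) (\<xi> j))"
    if k: "k \<le> N" and IH: "\<forall>i\<le>k. act (Q X i) (\<xi> N) = \<xi> (N - i)" for k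
  proof -
    have "act (det_right k X) (\<xi> N) = (\<Sum>i\<le>k. act (X i k * Q X i) (\<xi> N))"
      using det_hess[OF hs[OF k]] lm_sum[OF lm] by simp
    also have "\<dots> = (\<Sum>i\<le>k. act (M (N-k) (N-i)) (\<xi> (N - i)))"
    proof (rule sum.cong[OF refl])
      fix i assume "i \<in> {..k}"
      then have "act (Q X i) (\<xi> N) = \<xi> (N - i)" using IH by auto
      then show "act (X i k * Q X i) (\<xi> N) = act (M (N-k) (N-i)) (\<xi> (N - i))"
        using lm unfolding left_module_def X_def antidiag_transpose_def by simp
    qed
    also have "\<dots> = (\<Sum>j\<in>{N-k..N}. act (M (N-k) j) (\<xi> j))"
      by (rule sum_rev_idx[OF k])
    finally show ?thesis .
  qed
  have row: "(\<Sum>j\<in>{Suc s..N}. act (M (Suc s) j) (\<xi> j)) = \<xi> s" if s: "Suc s \<le> N" for s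
  proof -
    have z: "(\<Sum>j\<in>{..<s}. act (M (Suc s) j) (\<xi> j)) = 0"
      apply (rule sum.neutral) using assms(3) s lm_zero[OF lm] unfolding almost_triangular_def by auto
    have u: "{..N} = {..<s} \<union> {s..N}" using s by auto
    have "0 = (\<Sum>j\<le>N. act (M (Suc s) j) (\<xi> j))" using assms(4) s by simp
    also have "\<dots> = (\<Sum>j\<in>{..<s}. act (M (Suc s) j) (\<xi> j)) + (\<Sum>j\<in>{s..N}. act (M (Suc s) j) (\<xi> j))"
      unfolding u by (rule sum.union_disjoint) auto
    also have "\<dots> = act (M (Suc s) s) (\<xi> s) + (\<Sum>j\<in>{Suc s..N}. act (M (Suc s) j) (\<xi> j))"
      using z s by (simp add: sum.atLeast_Suc_atMost)
    also have "\<dots> = - \<xi> s + (\<Sum>j\<in>{Suc s..N}. act (M (Suc s) j) (\<xi> j))"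
      using assms(3) s lm_neg1[OF lm] unfolding almost_triangular_def by auto
    finally show ?thesis by (simp add: add.commute eq_neg_iff_add_eq_0 neg_eq_iff_add_eq_0)
  qed
  have main: "\<forall>i\<le>k. act (Q X i) (\<xi> N) = \<xi> (N - i)" if "k \<le> N" for k
    using that
  proof (induction k)
    case 0
    then show ?case using lm unfolding left_module_def Q_def by simp
  next
    case (Suc k)
    have IH: "\<forall>i\<le>k. act (Q X i) (\<xi> N) = \<xi> (N - i)" using Suc by simp
    have "act (Q X (Suc k)) (\<xi> N) = (\<Sum>j\<in>{N-k..N}. act (M (N-k) j) (\<xi> j))"
      using step[of k] IH Suc.prems by (simp add: Q_def)
    also have "\<dots> = \<xi> (N - Suc k)"
      using row[of "N - Suc k"] Suc.prems by (simp add: Suc_diff_Suc)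
    finally have "act (Q X (Suc k)) (\<xi> N) = \<xi> (N - Suc k)" .
    then show ?case using IH by (auto simp: le_Suc_eq)
  qed
  have "act (det_right N X) (\<xi> N) = (\<Sum>j\<in>{0..N}. act (M 0 j) (\<xi> j))"
    using step[of N] main[of N] by simp
  also have "\<dots> = 0" using assms(4) by (simp add: atLeast0AtMost)
  finally show ?thesis unfolding X_def .
qed

end
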